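(* Let $r\in\mathcal R$ be a proper distance matrix. Then $r$ is universal if and only if for each $n\in\mathbb N$ the orbit of $r$ under the group $S^n_\infty$ is everywhere dense (in the weak topology) in $\mathcal R^n(p_n(r))$. Moreover, $r$ is weakly universal if and only if its orbit under $S_\infty$ is everywhere dense in $\mathcal R$.
   Context: $\mathcal R$ is the set of infinite real matrices $r=\{r_{i,j}\}_{i,j\ge1}$ with $r_{i,i}=0$, $r_{i,j}\ge0$, $r_{i,j}=r_{j,i}$, $r_{i,k}+r_{k,j}\ge r_{i,j}$, with the weak (entrywise) topology; $\mathcal R_n$ is the analogous set of $n\times n$ matrices; $p_n(r)$ is the upper-left $n\times n$ corner; $r$ is proper if $r_{i,j}>0$ for $i\ne j$. For $q\in\mathcal R_n$, $A(q)=\{a\in\mathbb R^n:|a_i-a_j|\le q_{i,j}\le a_i+a_j\ \forall i,j\}$ and $\mathcal R^n(q)=\{r\in\mathcal R: p_n(r)=q\}$. $S_\infty$ is the group of finite permutations $g$ of $\mathbb N$, acting on $\mathcal R$ by $(gr)_{i,j}=r_{g(i),g(j)}$; $S^n_\infty$ is its subgroup of permutations fixing $1,\dots,n$, which maps each $\mathcal R^n(q)$ into itself. A proper $r$ is universal if for every $n$, $a\in A(p_n(r))$, $\epsilon>0$ there is $m$ with $\max_{i\le n}|r_{i,m}-a_i|<\epsilon$; a proper $r$ is weakly universal if for every $n$ the set of submatrices $\{r_{i_k,i_s}\}_{k,s=1}^n$ over all $n$-tuples of indices is dense in $\mathcal R_n$. *)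

theory Defs
  imports "HOL-Analysis.Analysis"
begin

text \<open>The paper's index i >= 1
  corresponds to index i - 1 here (0-based). The weak (entrywise) topology is the
  product topology, which is the library's topology on function spaces.\<close>

type_synonym imatrix = "nat \<Rightarrow> nat \<Rightarrow> real"

definition dist_matrix :: "imatrix \<Rightarrow> bool" where
  "dist_matrix r \<longleftrightarrow> (\<forall>i. r i i = 0) \<and> (\<forall>i j. r i j \<ge> 0) \<and> (\<forall>i j. r i j = r j i)
     \<and> (\<forall>i j k. r i k + r k j \<ge> r i j)"

definition DM :: "imatrix set" where
  "DM = {r. dist_matrix r}"

text \<open>n x n distance matrices: only entries with indices < n matter.\<close>
definition dist_matrix_n :: "nat \<Rightarrow> imatrix \<Rightarrow> bool" where
  "dist_matrix_n n q \<longleftrightarrow> (\<forall>i<n. q i i = 0) \<and> (\<forall>i<n. \<forall>j<n. q i j \<ge> 0)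
     \<and> (\<forall>i<n. \<forall>j<n. q i j = q j i) \<and> (\<forall>i<n. \<forall>j<n. \<forall>k<n. q i k + q k j \<ge> q i j)"

definition pn :: "nat \<Rightarrow> imatrix \<Rightarrow> imatrix" where
  "pn n r = (\<lambda>i j. if i < n \<and> j < n then r i j else 0)"

definition proper :: "imatrix \<Rightarrow> bool" where
  "proper r \<longleftrightarrow> (\<forall>i j. i \<noteq> j \<longrightarrow> r i j > 0)"

definition A_set :: "nat \<Rightarrow> imatrix \<Rightarrow> (nat \<Rightarrow> real) set" where
  "A_set n q = {a. \<forall>i<n. \<forall>j<n. \<bar>a i - a j\<bar> \<le> q i j \<and> q i j \<le> a i + a j}"

definition fiber :: "nat \<Rightarrow> imatrix \<Rightarrow> imatrix set" where
  "fiber n q = {r \<in> DM. \<forall>i<n. \<forall>j<n. r i j = q i j}"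

definition Sinf :: "(nat \<Rightarrow> nat) set" where
  "Sinf = {g. bij g \<and> finite {i. g i \<noteq> i}}"

definition Sinf_n :: "nat \<Rightarrow> (nat \<Rightarrow> nat) set" where
  "Sinf_n n = {g \<in> Sinf. \<forall>i<n. g i = i}"

definition act :: "(nat \<Rightarrow> nat) \<Rightarrow> imatrix \<Rightarrow> imatrix" where
  "act g r = (\<lambda>i j. r (g i) (g j))"

definition universal :: "imatrix \<Rightarrow> bool" where
  "universal r \<longleftrightarrow> proper r \<and>
     (\<forall>n. \<forall>a \<in> A_set n (pn n r). \<forall>\<epsilon>>0. \<exists>m. \<forall>i<n. \<bar>r i m - a i\<bar> < \<epsilon>)"

text \<open>Density in R_n (a finite-dimensional Euclidean space) written out with the max-norm.\<close>
definition weakly_universal :: "imatrix \<Rightarrow> bool" where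
  "weakly_universal r \<longleftrightarrow> proper r \<and>
     (\<forall>n q. dist_matrix_n n q \<longrightarrow> (\<forall>\<epsilon>>0. \<exists>idx :: nat \<Rightarrow> nat.
        \<forall>k<n. \<forall>s<n. \<bar>r (idx k) (idx s) - q k s\<bar> < \<epsilon>))"

end

theory Submission
  imports Defs
begin

lemma finite_min_choice:
  fixes P :: "nat \<Rightarrow> real \<Rightarrow> bool"
  assumes "\<forall>i<N. \<exists>e>0. \<forall>e'. 0 < e' \<and> e' \<le> e \<longrightarrow> P i e'"
  shows "\<exists>e>0. \<forall>e'. 0 < e' \<and> e' \<le> e \<longrightarrow> (\<forall>i<N. P i e')"
  using assms
proof (induction N)
  case 0 then show ?case by (intro exI[of _ 1]) auto
next
  case (Suc N)
  then obtain e1 where e1: "e1 > 0" "\<forall>e'. 0 < e' \<and> e' \<le> e1 \<longrightarrow> (\<forall>i<N. P i e')"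
    by auto
  from Suc.prems obtain e2 where e2: "e2 > 0" "\<forall>e'. 0 < e' \<and> e' \<le> e2 \<longrightarrow> P N e'"
    by auto
  have "min e1 e2 > 0" using e1 e2 by simp
  moreover have "\<forall>e'. 0 < e' \<and> e' \<le> min e1 e2 \<longrightarrow> (\<forall>i<Suc N. P i e')"
  proof (intro allI impI)
    fix e' i assume h: "0 < e' \<and> e' \<le> min e1 e2" "i < Suc N"
    show "P i e'"
    proof (cases "i = N")
      case True then show ?thesis using e2 h by simp
    next
      case False then have "i < N" using h(2) by simp
      then show ?thesis using e1 h by simp
    qed
  qed
  ultimately show ?case by blast
qed

lemma fun_open_box:
  fixes U :: "(nat \<Rightarrow> 'b::topological_space) set"
  assumes "open U" "x \<in> U"
  shows "\<exists>N V. (\<forall>i<N. open (V i) \<and> x i \<in> V i) \<and> {y. \<forall>i<N. y i \<in> V i} \<subseteq> U"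
proof -
  have "openin (product_topology (\<lambda>i. euclidean) UNIV) U" using assms(1) unfolding open_fun_def .
  then have "\<forall>x \<in> U. \<exists>W. finite {i \<in> UNIV. W i \<noteq> topspace euclidean} \<and>
                 (\<forall>i \<in> UNIV. openin euclidean (W i)) \<and> x \<in> Pi\<^sub>E UNIV W \<and> Pi\<^sub>E UNIV W \<subseteq> U"
    by (simp only: openin_product_topology_alt)
  then have "\<exists>W. finite {i \<in> UNIV. W i \<noteq> topspace euclidean} \<and>
                 (\<forall>i \<in> UNIV. openin euclidean (W i)) \<and> x \<in> Pi\<^sub>E UNIV W \<and> Pi\<^sub>E UNIV W \<subseteq> U"
    using assms(2) by (rule bspec)
  then obtain W where W0: "finite {i \<in> UNIV. W i \<noteq> topspace euclidean}"
     "\<forall>i \<in> UNIV. openin euclidean (W i)"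
     "x \<in> Pi\<^sub>E UNIV W" "Pi\<^sub>E UNIV W \<subseteq> U"
    by (elim exE conjE) 
  have W: "finite {i. W i \<noteq> UNIV}" "\<forall>i. open (W i)" "\<forall>i. x i \<in> W i"
    using W0(1) apply simp
    using W0(2) apply (metis UNIV_I open_openin)
    using W0(3) by (simp add: PiE_iff)
  obtain N where N: "{i. W i \<noteq> UNIV} \<subseteq> {..<N}"
    using finite_nat_bounded[OF W(1)] by (elim exE)
  have "{y. \<forall>i<N. y i \<in> W i} \<subseteq> U"
  proof
    fix y assume y: "y \<in> {y. \<forall>i<N. y i \<in> W i}"
    have "\<forall>i. y i \<in> W i"
    proof
      fix i show "y i \<in> W i"
      proof (cases "i < N")
        case True then show ?thesis using y by simp
      next
        case False
        have "W i = UNIV"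
        proof (rule ccontr)
          assume "W i \<noteq> UNIV"
          then have "i \<in> {..<N}" using N by blast
          then show False using False by simp
        qed
        then show ?thesis by simp
      qed
    qed
    then have "y \<in> Pi\<^sub>E UNIV W" by (simp add: PiE_iff)
    then show "y \<in> U" using W0(4) by blast
  qed
  then show ?thesis using W(2,3) by blast
qed

lemma real_fun_open_box:
  fixes U :: "(nat \<Rightarrow> real) set"
  assumes "open U" "x \<in> U"
  shows "\<exists>N. \<exists>e>0. \<forall>e'. 0 < e' \<and> e' \<le> e \<longrightarrow> (\<forall>N'. N \<le> N' \<longrightarrow> {y. \<forall>i<N'. \<bar>y i - x i\<bar> < e'} \<subseteq> U)"
proof -
  obtain N V where NV: "\<forall>i<N. open (V i) \<and> x i \<in> V i" "{y. \<forall>i<N. y i \<in> V i} \<subseteq> U"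
    using fun_open_box[OF assms] by blast
  have "\<forall>i<N. \<exists>e>0. \<forall>e'. 0 < e' \<and> e' \<le> e \<longrightarrow> (\<forall>z. \<bar>z - x i\<bar> < e' \<longrightarrow> z \<in> V i)"
  proof (intro allI impI)
    fix i assume "i < N"
    then obtain e where "e > 0" "ball (x i) e \<subseteq> V i" using NV(1) open_contains_ball by blast
    then show "\<exists>e>0. \<forall>e'. 0 < e' \<and> e' \<le> e \<longrightarrow> (\<forall>z. \<bar>z - x i\<bar> < e' \<longrightarrow> z \<in> V i)"
      by (intro exI[of _ e]) (auto simp: dist_real_def subset_iff)
  qed
  from finite_min_choice[OF this] obtain e where e: "e > 0"
    "\<forall>e'. 0 < e' \<and> e' \<le> e \<longrightarrow> (\<forall>i<N. \<forall>z. \<bar>z - x i\<bar> < e' \<longrightarrow> z \<in> V i)" by blast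
  show ?thesis
    using e NV(2) by (intro exI[of _ N] exI[of _ e]) (auto simp: subset_iff)
qed

lemma imatrix_open_box:
  fixes U :: "imatrix set"
  assumes "open U" "x \<in> U"
  shows "\<exists>N. \<exists>e>0. {y. \<forall>i<N. \<forall>j<N. \<bar>y i j - x i j\<bar> < e} \<subseteq> U"
proof -
  obtain N V where NV: "\<forall>i<N. open (V i) \<and> x i \<in> V i" "{y. \<forall>i<N. y i \<in> V i} \<subseteq> U"
    using fun_open_box[OF assms] by blast
  have "\<forall>i<N. \<exists>M. \<exists>e>0. \<forall>e'. 0 < e' \<and> e' \<le> e \<longrightarrow> (\<forall>N'. M \<le> N' \<longrightarrow> {y. \<forall>j<N'. \<bar>y j - x i j\<bar> < e'} \<subseteq> V i)"
    using NV(1) real_fun_open_box by blast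
  then have "\<forall>i. \<exists>M. i < N \<longrightarrow> (\<exists>e>0. \<forall>e'. 0 < e' \<and> e' \<le> e \<longrightarrow> (\<forall>N'. M \<le> N' \<longrightarrow> {y. \<forall>j<N'. \<bar>y j - x i j\<bar> < e'} \<subseteq> V i))"
    by blast
  from choice[OF this] obtain M where M: "\<forall>i<N. \<exists>e>0. \<forall>e'. 0 < e' \<and> e' \<le> e \<longrightarrow> (\<forall>N'. M i \<le> N' \<longrightarrow> {y. \<forall>j<N'. \<bar>y j - x i j\<bar> < e'} \<subseteq> V i)"
    by blast
  obtain e where e: "e > 0" "\<forall>e'. 0 < e' \<and> e' \<le> e \<longrightarrow> (\<forall>i<N. \<forall>N'. M i \<le> N' \<longrightarrow> {y. \<forall>j<N'. \<bar>y j - x i j\<bar> < e'} \<subseteq> V i)"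
    using finite_min_choice[of N "\<lambda>i e'. \<forall>N'. M i \<le> N' \<longrightarrow> {y. \<forall>j<N'. \<bar>y j - x i j\<bar> < e'} \<subseteq> V i"] M
    by blast
  define K where "K = max N (Max (M ` {..<N}))"
  have MM: "M i \<le> Max (M ` {..<N})" if "i < N" for i using that by (intro Max_ge) auto
  have K: "N \<le> K" "\<forall>i<N. M i \<le> K" unfolding K_def using MM by (auto simp: le_max_iff_disj)
  show ?thesis
  proof (intro exI[of _ K] exI[of _ e] conjI subsetI)
    show "e > 0" by fact
    fix y assume y: "y \<in> {y. \<forall>i<K. \<forall>j<K. \<bar>y i j - x i j\<bar> < e}"
    have "\<forall>i<N. y i \<in> V i"
    proof (intro allI impI)
      fix i assume i: "i < N"
      have "y i \<in> {z. \<forall>j<K. \<bar>z j - x i j\<bar> < e}" using y i K by auto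
      then show "y i \<in> V i" using e i K by blast
    qed
    then show "y \<in> U" using NV(2) by auto
  qed
qed

lemma cont_entry: "continuous_on UNIV (\<lambda>t::imatrix. t i j)"
  using continuous_on_product_then_coordinatewise[OF continuous_on_product_coordinates[of i]] .

lemma open_box: "open {t::imatrix. \<forall>i<N. \<forall>j<N. \<bar>t i j - s i j\<bar> < e}"
proof -
  have eq: "{t::imatrix. \<forall>i<N. \<forall>j<N. \<bar>t i j - s i j\<bar> < e} =
     (\<Inter>p\<in>{..<N}\<times>{..<N}. {t. \<bar>t (fst p) (snd p) - s (fst p) (snd p)\<bar> < e})" by auto
  have "open {t::imatrix. \<bar>t a b - s a b\<bar> < e}" for a b
  proof -
    have c: "continuous_on UNIV (\<lambda>t::imatrix. \<bar>t a b - s a b\<bar>)"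
      by (intro continuous_on_rabs continuous_on_diff cont_entry continuous_on_const)
    show ?thesis using open_Collect_less[OF c continuous_on_const] .
  qed
  then have O: "\<forall>p\<in>{..<N}\<times>{..<N}. open {t::imatrix. \<bar>t (fst p) (snd p) - s (fst p) (snd p)\<bar> < e}"
    by blast
  have F: "finite ({..<N}\<times>{..<N::nat})" by simp
  show ?thesis unfolding eq using open_INT[OF F O] .
qed

lemma closure_char:
  fixes S :: "imatrix set"
  shows "s \<in> closure S \<longleftrightarrow> (\<forall>N. \<forall>e>0. \<exists>t\<in>S. \<forall>i<N. \<forall>j<N. \<bar>t i j - s i j\<bar> < e)"
proof
  assume s: "s \<in> closure S"
  show "\<forall>N. \<forall>e>0. \<exists>t\<in>S. \<forall>i<N. \<forall>j<N. \<bar>t i j - s i j\<bar> < e"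
  proof (intro allI impI)
    fix N and e :: real assume "e > 0"
    let ?B = "{t::imatrix. \<forall>i<N. \<forall>j<N. \<bar>t i j - s i j\<bar> < e}"
    have "s \<in> ?B" using \<open>e > 0\<close> by auto
    then have "?B \<inter> closure S \<noteq> {}" using s by blast
    then have "?B \<inter> S \<noteq> {}" using open_Int_closure_eq_empty[OF open_box] by blast
    then show "\<exists>t\<in>S. \<forall>i<N. \<forall>j<N. \<bar>t i j - s i j\<bar> < e" by auto
  qed
next
  assume H: "\<forall>N. \<forall>e>0. \<exists>t\<in>S. \<forall>i<N. \<forall>j<N. \<bar>t i j - s i j\<bar> < e"
  show "s \<in> closure S"
  proof (rule ccontr)
    assume "s \<notin> closure S"
    then obtain N e where Ne: "e > 0" "{y. \<forall>i<N. \<forall>j<N. \<bar>y i j - s i j\<bar> < e} \<subseteq> - closure S"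
      using imatrix_open_box[of "- closure S" s] by auto
    obtain t where "t \<in> S" "\<forall>i<N. \<forall>j<N. \<bar>t i j - s i j\<bar> < e" using H Ne(1) by blast
    then show False using Ne(2) closure_subset by blast
  qed
qed

lemma bij_from_betw:
  assumes "bij_betw g S S" "\<And>x. x \<notin> S \<Longrightarrow> g x = x"
  shows "bij g"
proof -
  have "inj g"
  proof (rule injI)
    fix x y assume e: "g x = g y"
    show "x = y"
    proof (cases "x \<in> S"; cases "y \<in> S")
      assume "x \<in> S" "y \<in> S" then show ?thesis using e assms(1) by (auto simp: bij_betw_def inj_on_def)
    next
      assume "x \<in> S" "y \<notin> S" then show ?thesis using e assms by (metis bij_betwE)
    next
      assume "x \<notin> S" "y \<in> S" then show ?thesis using e assms by (metis bij_betwE)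
    next
      assume "x \<notin> S" "y \<notin> S" then show ?thesis using e assms by auto
    qed
  qed
  moreover have "surj g"
  proof -
    have "y \<in> range g" for y
    proof (cases "y \<in> S")
      case True then show ?thesis using assms(1) by (metis bij_betw_def imageE rangeI)
    next
      case False then show ?thesis using assms(2) by (metis rangeI)
    qed
    then show ?thesis by auto
  qed
  ultimately show ?thesis by (simp add: bij_def)
qed

lemma perm_extend:
  assumes inj: "inj_on f {..<N}"
  shows "\<exists>g\<in>Sinf. \<forall>k<N. g k = f k"
proof -
  define A where "A = {..<N}"
  define B where "B = f ` A"
  define S where "S = A \<union> B"
  have fin: "finite A" "finite B" "finite S" unfolding A_def B_def S_def by auto
  have cB: "card B = card A" unfolding B_def A_def using inj card_image by blast
  have "card (S - A) = card (S - B)"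
    using fin cB by (simp add: S_def card_Diff_subset)
  then obtain h where h: "bij_betw h (S - A) (S - B)"
    using finite_same_card_bij fin by (meson finite_Diff)
  define g where "g x = (if x \<in> A then f x else if x \<in> S - A then h x else x)" for x
  have b1: "bij_betw g A B" unfolding g_def B_def using inj A_def
    by (simp add: bij_betw_def inj_on_def image_def)
  have b2: "bij_betw g (S - A) (S - B)" using h unfolding g_def
    by (smt (verit, best) DiffE bij_betw_cong)
  have "bij_betw g (A \<union> (S - A)) (B \<union> (S - B))"
    by (rule bij_betw_combine[OF b1 b2]) auto
  moreover have "A \<union> (S - A) = S" "B \<union> (S - B) = S" unfolding S_def by auto
  ultimately have "bij_betw g S S" by simp
  moreover have "\<And>x. x \<notin> S \<Longrightarrow> g x = x" unfolding g_def S_def by auto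
  ultimately have "bij g" by (rule bij_from_betw)
  moreover have "finite {i. g i \<noteq> i}"
    using fin(3) by (rule finite_subset[rotated]) (auto simp: g_def S_def)
  ultimately have "g \<in> Sinf" unfolding Sinf_def by auto
  moreover have "\<forall>k<N. g k = f k" unfolding g_def A_def by auto
  ultimately show ?thesis by blast
qed

lemma Min_facts:
  fixes F :: "nat \<Rightarrow> real"
  assumes "0 < K"
  shows "\<And>i. i < K \<Longrightarrow> Min (F ` {..<K}) \<le> F i"
    and "\<exists>i<K. Min (F ` {..<K}) = F i"
proof -
  show "\<And>i. i < K \<Longrightarrow> Min (F ` {..<K}) \<le> F i" by (rule Min_le) auto
  have "Min (F ` {..<K}) \<in> F ` {..<K}" using assms by (intro Min_in) auto
  then show "\<exists>i<K. Min (F ` {..<K}) = F i" by auto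
qed

lemma core_step:
  fixes r s :: imatrix and m :: "nat \<Rightarrow> nat"
  assumes dr: "dist_matrix r"
    and U: "\<forall>M. \<forall>a\<in>A_set M (pn M r). \<forall>\<epsilon>>0. \<exists>m. \<forall>i<M. \<bar>r i m - a i\<bar> < \<epsilon>"
    and ds: "dist_matrix s"
    and K: "0 < K" and e: "e > 0"
    and err: "\<forall>i<K. \<forall>j<K. \<bar>r (m i) (m j) - s i j\<bar> < e"
    and sep: "\<forall>i<K. s i K > 0"
  shows "\<exists>mn. \<forall>i<K. \<bar>r (m i) mn - s i K\<bar> < 3 * e \<and> mn \<noteq> m i"
proof -
  define F where "F x i = s i K + r x (m i)" for x i
  define b where "b x = 2 * e + Min (F x ` {..<K})" for x
  define M where "M = Suc (Max (m ` {..<K}))"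
  have mM: "m i < M" if "i < K" for i
    unfolding M_def using that by (simp add: le_imp_less_Suc)
  have r0: "r x x = 0" and rs: "r x y = r y x" for x y
    using dr unfolding dist_matrix_def by auto
  have rt: "r x z \<le> r x y + r y z" for x y z
    using dr unfolding dist_matrix_def by metis
  have s0: "s x x = 0" and ss: "s x y = s y x" for x y
    using ds unfolding dist_matrix_def by auto
  have st: "s x z \<le> s x y + s y z" for x y z
    using ds unfolding dist_matrix_def by metis
  have bl: "b x \<le> 2 * e + F x i" if "i < K" for x i
    unfolding b_def using Min_facts(1)[OF K, of i "F x"] that by simp
  have be: "\<exists>i<K. b x = 2 * e + F x i" for x
    unfolding b_def using Min_facts(2)[OF K, of "F x"] by auto
  have "b \<in> A_set M (pn M r)"
    unfolding A_set_def pn_def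
  proof (intro CollectI allI impI conjI)
    fix x y assume "x < M" "y < M"
    obtain ix where ix: "ix < K" "b x = 2 * e + F x ix" using be by blast
    obtain iy where iy: "iy < K" "b y = 2 * e + F y iy" using be by blast
    have "b x \<le> b y + r x y"
      using bl[OF iy(1), of x] iy(2) rt[of x "m iy" y] rt[of x y "m iy"] unfolding F_def by linarith
    moreover have "b y \<le> b x + r x y"
      using bl[OF ix(1), of y] ix(2) rt[of y "m ix" x] rs[of x y] unfolding F_def by linarith
    ultimately show "\<bar>b x - b y\<bar> \<le> (if x < M \<and> y < M then r x y else 0)"
      using \<open>x < M\<close> \<open>y < M\<close> by auto
    have "r x y \<le> r x (m ix) + r (m ix) (m iy) + r (m iy) y"
      using rt[of x y "m ix"] rt[of "m ix" y "m iy"] by linarith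
    moreover have "r (m ix) (m iy) < s ix iy + e" using err ix(1) iy(1) by fastforce
    moreover have "s ix iy \<le> s ix K + s iy K" using st[of ix iy K] ss[of K iy] by linarith
    ultimately show "(if x < M \<and> y < M then r x y else 0) \<le> b x + b y"
      using \<open>x < M\<close> \<open>y < M\<close> ix(2) iy(2) rs[of "m iy" y] e unfolding F_def by auto
  qed
  then obtain mn where mn: "\<forall>x<M. \<bar>r x mn - b x\<bar> < e" using U e by blast
  have "\<bar>r (m i) mn - s i K\<bar> < 3 * e \<and> mn \<noteq> m i" if i: "i < K" for i
  proof -
    have up: "b (m i) \<le> 2 * e + s i K" using bl[OF i, of "m i"] r0 unfolding F_def by simp
    obtain j where j: "j < K" "b (m i) = 2 * e + F (m i) j" using be by blast
    have "r (m i) (m j) > s i j - e" using err i j(1) by fastforce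
    moreover have "s i K \<le> s i j + s j K" by (rule st)
    ultimately have lo: "b (m i) > e + s i K" using j(2) unfolding F_def by linarith
    have "\<bar>r (m i) mn - b (m i)\<bar> < e" using mn mM[OF i] by blast
    then have "r (m i) mn > s i K" "r (m i) mn < s i K + 3 * e" using up lo by linarith+
    moreover have "s i K > 0" using sep i by blast
    ultimately show ?thesis using r0[of "m i"] by auto
  qed
  then show ?thesis by blast
qed

lemma core:
  fixes r s :: imatrix
  assumes dr: "dist_matrix r"
    and U: "\<forall>M. \<forall>a\<in>A_set M (pn M r). \<forall>\<epsilon>>0. \<exists>m. \<forall>i<M. \<bar>r i m - a i\<bar> < \<epsilon>"
    and ds: "dist_matrix s"
    and agree: "\<forall>i<n. \<forall>j<n. s i j = r i j"
    and sep: "\<forall>i j. i \<noteq> j \<and> (n \<le> i \<or> n \<le> j) \<longrightarrow> s i j > 0"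
    and nK: "n \<le> K"
  shows "\<forall>\<eta>>0. \<exists>m. inj_on m {..<K} \<and> (\<forall>k<n. m k = k) \<and>
            (\<forall>i<K. \<forall>j<K. \<bar>r (m i) (m j) - s i j\<bar> < \<eta>)"
  using nK
proof (induction K rule: dec_induct)
  case base
  show ?case using agree by (intro allI impI exI[of _ id]) auto
next
  case (step K)
  have r0: "r x x = 0" and rs: "r x y = r y x" for x y
    using dr unfolding dist_matrix_def by auto
  have s0: "s x x = 0" and ss: "s x y = s y x" for x y
    using ds unfolding dist_matrix_def by auto
  show ?case
  proof (intro allI impI)
    fix \<eta> :: real assume "\<eta> > 0"
    show "\<exists>m. inj_on m {..<Suc K} \<and> (\<forall>k<n. m k = k) \<and>
            (\<forall>i<Suc K. \<forall>j<Suc K. \<bar>r (m i) (m j) - s i j\<bar> < \<eta>)"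
    proof (cases "K = 0")
      case True
      then show ?thesis using r0 s0 step(1) \<open>\<eta> > 0\<close> by (intro exI[of _ "\<lambda>_. 0"]) (auto simp: lessThan_Suc)
    next
      case False
      obtain m where m: "inj_on m {..<K}" "\<forall>k<n. m k = k"
        "\<forall>i<K. \<forall>j<K. \<bar>r (m i) (m j) - s i j\<bar> < \<eta> / 3"
        using step(3) \<open>\<eta> > 0\<close> by (metis divide_pos_pos zero_less_numeral)
      have sepK: "\<forall>i<K. s i K > 0" using sep step(1) by auto
      obtain mn where mn: "\<forall>i<K. \<bar>r (m i) mn - s i K\<bar> < 3 * (\<eta> / 3) \<and> mn \<noteq> m i"
        using core_step[OF dr U ds _ _ m(3) sepK] False \<open>\<eta> > 0\<close> by auto
      define m' where "m' = m(K := mn)"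
      have "inj_on m' {..<Suc K}"
      proof -
        have "inj_on m' {..<K}" using m(1) unfolding m'_def inj_on_def by auto
        moreover have "m' K \<notin> m' ` {..<K}" using mn unfolding m'_def by auto
        ultimately show ?thesis by (simp add: lessThan_Suc)
      qed
      moreover have "\<forall>k<n. m' k = k" using m(2) step(1) unfolding m'_def by auto
      moreover have "\<forall>i<Suc K. \<forall>j<Suc K. \<bar>r (m' i) (m' j) - s i j\<bar> < \<eta>"
      proof (intro allI impI)
        fix i j assume i: "i < Suc K" and j: "j < Suc K"
        show "\<bar>r (m' i) (m' j) - s i j\<bar> < \<eta>"
        proof (cases "i = K"; cases "j = K")
          assume "i = K" "j = K" then show ?thesis using r0 s0 \<open>\<eta> > 0\<close> by simp
        next
          assume "i = K" "j \<noteq> K"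
          then have "j < K" using j by auto
          then show ?thesis using mn \<open>i = K\<close> rs[of mn "m j"] ss[of K j] unfolding m'_def by auto
        next
          assume "i \<noteq> K" "j = K"
          then have "i < K" using i by auto
          then show ?thesis using mn \<open>j = K\<close> unfolding m'_def by auto
        next
          assume "i \<noteq> K" "j \<noteq> K"
          then have "i < K" "j < K" using i j by auto
          then show ?thesis using m(3) \<open>\<eta> > 0\<close> \<open>i \<noteq> K\<close> \<open>j \<noteq> K\<close> unfolding m'_def by fastforce
        qed
      qed
      ultimately show ?thesis by blast
    qed
  qed
qed

definition pert :: "nat \<Rightarrow> real \<Rightarrow> imatrix \<Rightarrow> imatrix" where
  "pert n d s = (\<lambda>i j. s i j + (if i \<noteq> j \<and> (n \<le> i \<or> n \<le> j) then d else 0))"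

lemma pert_dm:
  assumes ds: "dist_matrix s" and d: "d \<ge> 0"
  shows "dist_matrix (pert n d s)"
proof -
  have s0: "s x x = 0" and ss: "s x y = s y x" and sp: "s x y \<ge> 0" for x y
    using ds unfolding dist_matrix_def by auto
  have st: "s x z \<le> s x y + s y z" for x y z
    using ds unfolding dist_matrix_def by metis
  have "pert n d s i j \<le> pert n d s i k + pert n d s k j" for i j k
  proof (cases "k = i \<or> k = j")
    case True then show ?thesis using s0 unfolding pert_def by auto
  next
    case False
    then show ?thesis using st[of i j k] d unfolding pert_def by auto
  qed
  then show ?thesis using s0 ss sp d unfolding dist_matrix_def pert_def by auto
qed

lemma pert_close: "d \<ge> 0 \<Longrightarrow> \<bar>pert n d s i j - s i j\<bar> \<le> d"
  unfolding pert_def by auto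

lemma part1_fwd:
  fixes r :: imatrix
  assumes dr: "dist_matrix r" and u: "universal r"
  shows "fiber n (pn n r) \<subseteq> closure ((\<lambda>g. act g r) ` Sinf_n n)"
proof
  fix s assume "s \<in> fiber n (pn n r)"
  then have ds: "dist_matrix s" and ag: "\<forall>i<n. \<forall>j<n. s i j = r i j"
    unfolding fiber_def DM_def pn_def by auto
  have U: "\<forall>M. \<forall>a\<in>A_set M (pn M r). \<forall>\<epsilon>>0. \<exists>m. \<forall>i<M. \<bar>r i m - a i\<bar> < \<epsilon>"
    using u unfolding universal_def by blast
  show "s \<in> closure ((\<lambda>g. act g r) ` Sinf_n n)"
    unfolding closure_char
  proof (intro allI impI)
    fix N and e :: real assume e: "e > 0"
    define N' where "N' = max N n"
    define s' where "s' = pert n (e/2) s"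
    have ds': "dist_matrix s'" unfolding s'_def using pert_dm ds e by simp
    have ag': "\<forall>i<n. \<forall>j<n. s' i j = r i j" using ag unfolding s'_def pert_def by auto
    have sp: "s x y \<ge> 0" for x y using ds unfolding dist_matrix_def by auto
    have sep: "\<forall>i j. i \<noteq> j \<and> (n \<le> i \<or> n \<le> j) \<longrightarrow> s' i j > 0"
      using sp e unfolding s'_def pert_def by (auto simp: add_nonneg_pos)
    have "n \<le> N'" unfolding N'_def by simp
    have C: "\<forall>\<eta>>0. \<exists>m. inj_on m {..<N'} \<and> (\<forall>k<n. m k = k) \<and>
            (\<forall>i<N'. \<forall>j<N'. \<bar>r (m i) (m j) - s' i j\<bar> < \<eta>)"
      by (rule core[OF dr U ds' ag' sep \<open>n \<le> N'\<close>])
    have "e/2 > 0" using e by simp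
    then obtain m where m: "inj_on m {..<N'}" "\<forall>k<n. m k = k"
      "\<forall>i<N'. \<forall>j<N'. \<bar>r (m i) (m j) - s' i j\<bar> < e/2"
      using C by blast
    obtain g where g: "g \<in> Sinf" "\<forall>k<N'. g k = m k" using perm_extend[OF m(1)] by blast
    have "g \<in> Sinf_n n" using g m(2) unfolding Sinf_n_def N'_def by auto
    moreover have "\<forall>i<N. \<forall>j<N. \<bar>act g r i j - s i j\<bar> < e"
    proof (intro allI impI)
      fix i j assume "i < N" "j < N"
      then have "i < N'" "j < N'" unfolding N'_def by auto
      then have "\<bar>r (m i) (m j) - s' i j\<bar> < e/2" using m(3) by blast
      moreover have "\<bar>s' i j - s i j\<bar> \<le> e/2" unfolding s'_def by (rule pert_close) (use e in simp)
      moreover have "\<bar>r (m i) (m j) - s i j\<bar> \<le> \<bar>r (m i) (m j) - s' i j\<bar> + \<bar>s' i j - s i j\<bar>"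
        using abs_triangle_ineq[of "r (m i) (m j) - s' i j" "s' i j - s i j"] by simp
      ultimately have "\<bar>r (m i) (m j) - s i j\<bar> < e" by linarith
      then show "\<bar>act g r i j - s i j\<bar> < e"
        using g(2) \<open>i < N'\<close> \<open>j < N'\<close> unfolding act_def by auto
    qed
    ultimately show "\<exists>t\<in>(\<lambda>g. act g r) ` Sinf_n n. \<forall>i<N. \<forall>j<N. \<bar>t i j - s i j\<bar> < e"
      by blast
  qed
qed

lemma part1_bwd:
  fixes r :: imatrix
  assumes dr: "dist_matrix r" and pr: "proper r"
    and H: "\<forall>n. fiber n (pn n r) \<subseteq> closure ((\<lambda>g. act g r) ` Sinf_n n)"
  shows "universal r"
  unfolding universal_def
proof (intro conjI pr allI ballI impI)
  fix n a and e :: real assume a: "a \<in> A_set n (pn n r)" and e: "e > 0"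
  have a1: "\<bar>a i - a j\<bar> \<le> r i j" and a2: "r i j \<le> a i + a j" if "i < n" "j < n" for i j
    using a that unfolding A_set_def pn_def by auto
  have r0: "r x x = 0" and rs: "r x y = r y x" and rp: "r x y \<ge> 0" for x y
    using dr unfolding dist_matrix_def by auto
  have rt: "r x z \<le> r x y + r y z" for x y z
    using dr unfolding dist_matrix_def by metis
  have ap: "a i \<ge> 0" if "i < n" for i using a2[OF that that] r0[of i] by simp
  define s where "s i j = (if i < n \<and> j < n then r i j else if i < n then a i else if j < n then a j else 0)" for i j
  have "dist_matrix s"
  proof -
    have "s i j \<le> s i k + s k j" for i j k
    proof (cases "i < n"; cases "j < n"; cases "k < n")
      assume "i < n" "j < n" "k < n" then show ?thesis unfolding s_def using rt[of i j k] by auto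
    next
      assume "i < n" "j < n" "\<not> k < n" then show ?thesis unfolding s_def using a2[of i j] by auto
    next
      assume "i < n" "\<not> j < n" "k < n" then show ?thesis unfolding s_def using a1[of i k] by (auto simp: abs_le_iff)
    next
      assume "i < n" "\<not> j < n" "\<not> k < n" then show ?thesis unfolding s_def by auto
    next
      assume "\<not> i < n" "j < n" "k < n" then show ?thesis unfolding s_def using a1[of k j] by (auto simp: abs_le_iff)
    next
      assume "\<not> i < n" "j < n" "\<not> k < n" then show ?thesis unfolding s_def by auto
    next
      assume "\<not> i < n" "\<not> j < n" "k < n" then show ?thesis unfolding s_def using ap[of k] by auto
    next
      assume "\<not> i < n" "\<not> j < n" "\<not> k < n" then show ?thesis unfolding s_def by auto
    qed
    then show ?thesis unfolding dist_matrix_def s_def using r0 rs rp ap by auto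
  qed
  then have "s \<in> fiber n (pn n r)" unfolding fiber_def DM_def pn_def s_def by auto
  then have "s \<in> closure ((\<lambda>g. act g r) ` Sinf_n n)" using H by blast
  then obtain g where g: "g \<in> Sinf_n n" "\<forall>i<Suc n. \<forall>j<Suc n. \<bar>act g r i j - s i j\<bar> < e"
    unfolding closure_char using e by blast
  have "\<forall>i<n. \<bar>r i (g n) - a i\<bar> < e"
  proof (intro allI impI)
    fix i assume i: "i < n"
    have "\<bar>act g r i n - s i n\<bar> < e" using g(2) i by auto
    moreover have "g i = i" using g(1) i unfolding Sinf_n_def by auto
    ultimately show "\<bar>r i (g n) - a i\<bar> < e" unfolding act_def s_def using i by auto
  qed
  then show "\<exists>m. \<forall>i<n. \<bar>r i m - a i\<bar> < e" by blast
qed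

lemma part2_fwd:
  fixes r :: imatrix
  assumes dr: "dist_matrix r" and w: "weakly_universal r"
  shows "DM \<subseteq> closure ((\<lambda>g. act g r) ` Sinf)"
proof
  fix s assume "s \<in> DM"
  then have ds: "dist_matrix s" unfolding DM_def by auto
  have r0: "r x x = 0" for x using dr unfolding dist_matrix_def by auto
  show "s \<in> closure ((\<lambda>g. act g r) ` Sinf)"
    unfolding closure_char
  proof (intro allI impI)
    fix N and e :: real assume e: "e > 0"
    define s' where "s' = pert 0 (e/2) s"
    have ds': "dist_matrix s'" unfolding s'_def using pert_dm ds e by simp
    then have "dist_matrix_n N s'" unfolding dist_matrix_def dist_matrix_n_def by auto
    then obtain idx where idx: "\<forall>k<N. \<forall>l<N. \<bar>r (idx k) (idx l) - s' k l\<bar> < e/2"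
    proof -
      have "\<forall>\<epsilon>>0. \<exists>idx :: nat \<Rightarrow> nat. \<forall>k<N. \<forall>l<N. \<bar>r (idx k) (idx l) - s' k l\<bar> < \<epsilon>"
        using w \<open>dist_matrix_n N s'\<close> unfolding weakly_universal_def by blast
      moreover have "e/2 > 0" using e by simp
      ultimately show ?thesis using that by blast
    qed
    have sp: "s x y \<ge> 0" for x y using ds unfolding dist_matrix_def by auto
    have "inj_on idx {..<N}"
    proof (rule inj_onI)
      fix k l assume k: "k \<in> {..<N}" and l: "l \<in> {..<N}" and eq: "idx k = idx l"
      show "k = l"
      proof (rule ccontr)
        assume "k \<noteq> l"
        then have "s' k l \<ge> e/2" using sp[of k l] unfolding s'_def pert_def by auto
        moreover have "\<bar>r (idx k) (idx l) - s' k l\<bar> < e/2" using idx k l by auto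
        ultimately show False using eq r0 by auto
      qed
    qed
    then obtain g where g: "g \<in> Sinf" "\<forall>k<N. g k = idx k" using perm_extend by blast
    have "\<forall>i<N. \<forall>j<N. \<bar>act g r i j - s i j\<bar> < e"
    proof (intro allI impI)
      fix i j assume "i < N" "j < N"
      then have "\<bar>r (idx i) (idx j) - s' i j\<bar> < e/2" using idx by blast
      moreover have "\<bar>s' i j - s i j\<bar> \<le> e/2" unfolding s'_def by (rule pert_close) (use e in simp)
      moreover have "\<bar>r (idx i) (idx j) - s i j\<bar> \<le> \<bar>r (idx i) (idx j) - s' i j\<bar> + \<bar>s' i j - s i j\<bar>"
        using abs_triangle_ineq[of "r (idx i) (idx j) - s' i j" "s' i j - s i j"] by simp
      ultimately have "\<bar>r (idx i) (idx j) - s i j\<bar> < e" by linarith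
      then show "\<bar>act g r i j - s i j\<bar> < e"
        using g(2) \<open>i < N\<close> \<open>j < N\<close> unfolding act_def by auto
    qed
    then show "\<exists>t\<in>(\<lambda>g. act g r) ` Sinf. \<forall>i<N. \<forall>j<N. \<bar>t i j - s i j\<bar> < e"
      using g(1) by blast
  qed
qed

lemma part2_bwd:
  fixes r :: imatrix
  assumes pr: "proper r" and H: "DM \<subseteq> closure ((\<lambda>g. act g r) ` Sinf)"
  shows "weakly_universal r"
  unfolding weakly_universal_def
proof (intro conjI pr allI impI)
  fix n q and e :: real assume q: "dist_matrix_n n q" and e: "e > 0"
  show "\<exists>idx. \<forall>k<n. \<forall>s<n. \<bar>r (idx k) (idx s) - q k s\<bar> < e"
  proof (cases "n = 0")
    case True then show ?thesis by auto
  next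
    case False
    define f where "f i = min i (n - 1)" for i
    have fn: "f i < n" for i using False unfolding f_def by auto
    have fid: "i < n \<Longrightarrow> f i = i" for i unfolding f_def by auto
    define s where "s i j = q (f i) (f j)" for i j
    have q0: "\<forall>i<n. q i i = 0" and qp: "\<forall>i<n. \<forall>j<n. q i j \<ge> 0"
      and qs: "\<forall>i<n. \<forall>j<n. q i j = q j i"
      and qt: "\<forall>i<n. \<forall>j<n. \<forall>k<n. q i k + q k j \<ge> q i j"
      using q unfolding dist_matrix_n_def by auto
    have "dist_matrix s"
      unfolding dist_matrix_def
    proof (intro conjI allI)
      fix i show "s i i = 0" using q0 fn unfolding s_def by simp
    next
      fix i j show "0 \<le> s i j" using qp fn unfolding s_def by simp
    next
      fix i j show "s i j = s j i" using qs fn unfolding s_def by simp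
    next
      fix i j k show "s i j \<le> s i k + s k j" using qt fn unfolding s_def by simp
    qed
    then have "s \<in> closure ((\<lambda>g. act g r) ` Sinf)" using H unfolding DM_def by auto
    then obtain g where g: "\<forall>i<n. \<forall>j<n. \<bar>act g r i j - s i j\<bar> < e"
      unfolding closure_char using e by blast
    then show ?thesis unfolding act_def s_def using fid by (intro exI[of _ g]) auto
  qed
qed

theorem mainTheorem11:
  fixes r :: imatrix
  assumes "dist_matrix r" and "proper r"
  shows "(universal r \<longleftrightarrow>
            (\<forall>n. fiber n (pn n r) \<subseteq> closure ((\<lambda>g. act g r) ` Sinf_n n)))
       \<and> (weakly_universal r \<longleftrightarrow> DM \<subseteq> closure ((\<lambda>g. act g r) ` Sinf))"
proof (intro conjI iffI)
  show "\<forall>n. fiber n (pn n r) \<subseteq> closure ((\<lambda>g. act g r) ` Sinf_n n)" if "universal r"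
    using part1_fwd[OF assms(1) that] by blast
  show "universal r" if "\<forall>n. fiber n (pn n r) \<subseteq> closure ((\<lambda>g. act g r) ` Sinf_n n)"
    by (rule part1_bwd[OF assms that])
  show "DM \<subseteq> closure ((\<lambda>g. act g r) ` Sinf)" if "weakly_universal r"
    by (rule part2_fwd[OF assms(1) that])
  show "weakly_universal r" if "DM \<subseteq> closure ((\<lambda>g. act g r) ` Sinf)"
    by (rule part2_bwd[OF assms(2) that])
qed

end
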